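(* Let $A$ be a synaptic algebra, let $p,q\in P$, and define $p_r:=p\wedge(p^{\perp}\vee q)\wedge(p^{\perp}\vee q^{\perp})\in P$. Then: (i) $p=((p\wedge q)\vee(p\wedge q^{\perp}))\oplus p_r=(p\wedge q)\vee(p\wedge q^{\perp})\vee p_r=(p\wedge q)\oplus(p\wedge q^{\perp})\oplus p_r$; (ii) $0\le p_r\le p$ and $p-p_r=(p\wedge q)\vee(p\wedge q^{\perp})$; (iii) $pCq$ iff $p_r=0$.
   Context: Synaptic algebra (Foulis): $R$ is a real linear associative algebra with unit $1$, and $A\subseteq R$ is a real linear subspace with $1\in A$. For $a,b\in A$ write $aCb$ iff $ab=ba$; $C(a):=\{b\in A: aCb\}$; $CC(a):=\{b\in A: bCd \text{ for all } d\in C(a)\}$. $A$ is a synaptic algebra with enveloping algebra $R$ iff: (SA1) $A$ is a partially ordered archimedean real linear space with positive cone $A^+$, $1$ is an order unit, $\|\cdot\|$ the order-unit norm; (SA2) $a\in A\Rightarrow a^2\in A^+$; (SA3) $a,b\in A^+\Rightarrow aba\in A^+$; (SA4) if $a\in A$, $b\in A^+$, $aba=0$ then $ab=ba=0$; (SA5) if $a\in A^+$ there is $b\in A^+\cap CC(a)$ with $b^2=a$; (SA6) for $a\in A$ there is $p=p^2\in A$ with $ab=0\Leftrightarrow pb=0$ for all $b\in A$; (SA7) if $1\le a$ there is $b\in A$ with $ab=ba=1$; (SA8) if $a,b\in A$, $a_1\le a_2\le\cdots$ are pairwise commuting elements of $C(b)$ with $\|a-a_n\|\to0$, then $a\in C(b)$.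 $A$ is nondegenerate ($1\neq 0$). $P:=\{p\in A:p=p^2\}$ with the order inherited from $A$ is an orthomodular lattice with orthocomplement $p^{\perp}:=1-p$, meet $\wedge$, join $\vee$. Projections $p,q$ are orthogonal iff $p\le q^{\perp}$, and then $p\oplus q:=p+q$ (orthosum). *)

theory Defs
  imports "HOL-Analysis.Analysis"
begin

text \<open>A synaptic algebra is given by its enveloping algebra (the type 'r, a real
unital associative algebra), the subspace A, and its positive cone pos.\<close>

definition sle :: "'r::real_algebra_1 set \<Rightarrow> 'r \<Rightarrow> 'r \<Rightarrow> bool" where
  "sle pos a b \<longleftrightarrow> b - a \<in> pos"

definition comm_set :: "'r::real_algebra_1 set \<Rightarrow> 'r \<Rightarrow> 'r set" where
  "comm_set A a = {b \<in> A. a * b = b * a}"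

definition bicomm_set :: "'r::real_algebra_1 set \<Rightarrow> 'r \<Rightarrow> 'r set" where
  "bicomm_set A a = {b \<in> A. \<forall>d \<in> comm_set A a. b * d = d * b}"

definition ou_norm :: "'r::real_algebra_1 set \<Rightarrow> 'r \<Rightarrow> real" where
  "ou_norm pos a = Inf {t. 0 < t \<and> sle pos (- (t *\<^sub>R 1)) a \<and> sle pos a (t *\<^sub>R 1)}"

definition synaptic_algebra :: "'r::real_algebra_1 set \<Rightarrow> 'r set \<Rightarrow> bool" where
  "synaptic_algebra A pos \<longleftrightarrow>
     subspace A \<and> 1 \<in> A \<and> (1::'r) \<noteq> 0 \<and>
     \<comment> \<open>SA1: partially ordered archimedean real linear space, 1 an order unit\<close>
     pos \<subseteq> A \<and>
     (\<forall>a\<in>pos. \<forall>b\<in>pos. a + b \<in> pos) \<and>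
     (\<forall>a\<in>pos. \<forall>t::real. 0 \<le> t \<longrightarrow> t *\<^sub>R a \<in> pos) \<and>
     (\<forall>a\<in>pos. - a \<in> pos \<longrightarrow> a = 0) \<and>
     (\<forall>a\<in>A. \<forall>b\<in>A. (\<forall>n::nat. sle pos (real n *\<^sub>R a) b) \<longrightarrow> sle pos a 0) \<and>
     (\<forall>a\<in>A. \<exists>n::nat. sle pos (- (real n *\<^sub>R 1)) a \<and> sle pos a (real n *\<^sub>R 1)) \<and>
     \<comment> \<open>SA2\<close>
     (\<forall>a\<in>A. a * a \<in> pos) \<and>
     \<comment> \<open>SA3\<close>
     (\<forall>a\<in>pos. \<forall>b\<in>pos. a * b * a \<in> pos) \<and>
     \<comment> \<open>SA4\<close>
     (\<forall>a\<in>A. \<forall>b\<in>pos. a * b * a = 0 \<longrightarrow> a * b = 0 \<and> b * a = 0) \<and>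
     \<comment> \<open>SA5\<close>
     (\<forall>a\<in>pos. \<exists>b\<in>pos. b \<in> bicomm_set A a \<and> b * b = a) \<and>
     \<comment> \<open>SA6\<close>
     (\<forall>a\<in>A. \<exists>p\<in>A. p * p = p \<and> (\<forall>b\<in>A. a * b = 0 \<longleftrightarrow> p * b = 0)) \<and>
     \<comment> \<open>SA7\<close>
     (\<forall>a\<in>A. sle pos 1 a \<longrightarrow> (\<exists>b\<in>A. a * b = 1 \<and> b * a = 1)) \<and>
     \<comment> \<open>SA8\<close>
     (\<forall>a\<in>A. \<forall>b\<in>A. \<forall>f::nat \<Rightarrow> 'r.
        (\<forall>n. f n \<in> comm_set A b) \<and> (\<forall>n. sle pos (f n) (f (Suc n))) \<and>
        (\<forall>m n. f m * f n = f n * f m) \<and>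
        (\<lambda>n. ou_norm pos (a - f n)) \<longlonglongrightarrow> 0
        \<longrightarrow> a \<in> comm_set A b)"

definition proj :: "'r::real_algebra_1 set \<Rightarrow> 'r set" where
  "proj A = {p \<in> A. p * p = p}"

definition pmeet :: "'r::real_algebra_1 set \<Rightarrow> 'r set \<Rightarrow> 'r \<Rightarrow> 'r \<Rightarrow> 'r" where
  "pmeet A pos p q = (THE r. r \<in> proj A \<and> sle pos r p \<and> sle pos r q \<and>
      (\<forall>s\<in>proj A. sle pos s p \<and> sle pos s q \<longrightarrow> sle pos s r))"

definition pjoin :: "'r::real_algebra_1 set \<Rightarrow> 'r set \<Rightarrow> 'r \<Rightarrow> 'r \<Rightarrow> 'r" where
  "pjoin A pos p q = (THE r. r \<in> proj A \<and> sle pos p r \<and> sle pos q r \<and>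
      (\<forall>s\<in>proj A. sle pos p s \<and> sle pos q s \<longrightarrow> sle pos r s))"

definition pperp :: "'r::real_algebra_1 \<Rightarrow> 'r" where
  "pperp p = 1 - p"

text \<open>Orthogonality of projections: p \<le> perp(q); then p \<oplus> q = p + q.\<close>
definition portho :: "'r::real_algebra_1 set \<Rightarrow> 'r \<Rightarrow> 'r \<Rightarrow> bool" where
  "portho pos p q \<longleftrightarrow> sle pos p (pperp q)"

end

theory Submission
  imports Defs
begin

locale sa =
  fixes A pos :: "'r::real_algebra_1 set"
  assumes SA: "synaptic_algebra A pos"
begin

lemma subA: "subspace A" using SA unfolding synaptic_algebra_def by (elim conjE)
lemma oneA: "1 \<in> A" using SA unfolding synaptic_algebra_def by (elim conjE)
lemma posA0: "pos \<subseteq> A" using SA unfolding synaptic_algebra_def by (elim conjE)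
lemma posA: "x \<in> pos \<Longrightarrow> x \<in> A" using posA0 by blast
lemma pos_anti0: "\<forall>a\<in>pos. - a \<in> pos \<longrightarrow> a = 0"
  using SA unfolding synaptic_algebra_def by (elim conjE)
lemma pos_anti: "x \<in> pos \<Longrightarrow> - x \<in> pos \<Longrightarrow> x = 0"
  using pos_anti0 by blast
lemma sq_pos0: "\<forall>a\<in>A. a * a \<in> pos" using SA unfolding synaptic_algebra_def by (elim conjE)
lemma sq_pos: "a \<in> A \<Longrightarrow> a * a \<in> pos" using sq_pos0 by blast
lemma sa30: "\<forall>a\<in>pos. \<forall>b\<in>pos. a * b * a \<in> pos"
  using SA unfolding synaptic_algebra_def by (elim conjE)
lemma sa3: "a \<in> pos \<Longrightarrow> b \<in> pos \<Longrightarrow> a * b * a \<in> pos"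
  using sa30 by blast
lemma sa40: "\<forall>a\<in>A. \<forall>b\<in>pos. a * b * a = 0 \<longrightarrow> a * b = 0 \<and> b * a = 0"
  using SA unfolding synaptic_algebra_def by (elim conjE)
lemma sa4: "a \<in> A \<Longrightarrow> b \<in> pos \<Longrightarrow> a * b * a = 0 \<Longrightarrow> a * b = 0 \<and> b * a = 0"
  using sa40 by blast
lemma sa60: "\<forall>a\<in>A. \<exists>p\<in>A. p * p = p \<and> (\<forall>b\<in>A. a * b = 0 \<longleftrightarrow> p * b = 0)"
  using SA unfolding synaptic_algebra_def by (elim conjE)
lemma sa6: "a \<in> A \<Longrightarrow> \<exists>p\<in>A. p * p = p \<and> (\<forall>b\<in>A. a * b = 0 \<longleftrightarrow> p * b = 0)"
  using sa60 by blast

lemma diffA: "x \<in> A \<Longrightarrow> y \<in> A \<Longrightarrow> x - y \<in> A" using subspace_diff[OF subA] by blast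
lemma addA: "x \<in> A \<Longrightarrow> y \<in> A \<Longrightarrow> x + y \<in> A" using subspace_add[OF subA] by blast
lemma scaleA: "x \<in> A \<Longrightarrow> c *\<^sub>R x \<in> A" using subspace_scale[OF subA] by blast

lemma projD: "p \<in> proj A \<Longrightarrow> p \<in> A \<and> p * p = p" unfolding proj_def by blast

lemma proj_pos: "p \<in> proj A \<Longrightarrow> p \<in> pos"
  using projD sq_pos by metis

lemma idem_pos: "x \<in> A \<Longrightarrow> x * x = x \<Longrightarrow> x \<in> pos"
  using sq_pos by metis

lemma proj_perp: assumes "p \<in> proj A" shows "1 - p \<in> proj A"
proof -
  have pp: "p * p = p" "p \<in> A" using projD[OF assms] by auto
  have "(1 - p) * (1 - p) = 1 - p - p + p * p" by (simp add: algebra_simps)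
  also have "\<dots> = 1 - p" using pp by simp
  finally show ?thesis using diffA[OF oneA pp(2)] unfolding proj_def by blast
qed

lemma le_iff:
  assumes hp: "p \<in> proj A" and hs: "s \<in> proj A"
  shows "sle pos p s \<longleftrightarrow> p * s = p \<and> s * p = p"
proof
  have pp: "p * p = p" "p \<in> A" and ss: "s * s = s" "s \<in> A" using projD hp hs by auto
  assume le: "sle pos p s"
  hence d: "s - p \<in> pos" unfolding sle_def .
  have e1: "(1 - s) * s = 0" using ss by (simp add: algebra_simps)
  have "(1 - s) * (s - p) * (1 - s) = - ((1 - s) * p * (1 - s))"
    by (simp add: right_diff_distrib e1)
  moreover have "(1 - s) * (s - p) * (1 - s) \<in> pos"
    using sa3[OF proj_pos[OF proj_perp[OF hs]] d] .
  moreover have X: "(1 - s) * p * (1 - s) \<in> pos"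
    using sa3[OF proj_pos[OF proj_perp[OF hs]] proj_pos[OF hp]] .
  ultimately have "(1 - s) * p * (1 - s) = 0" using pos_anti by metis
  from sa4[OF diffA[OF oneA ss(2)] proj_pos[OF hp] this]
  have "(1 - s) * p = 0" "p * (1 - s) = 0" by auto
  thus "p * s = p \<and> s * p = p" by (simp_all add: algebra_simps)
next
  have pp: "p * p = p" "p \<in> A" and ss: "s * s = s" "s \<in> A" using projD hp hs by auto
  assume h: "p * s = p \<and> s * p = p"
  have "(s - p) * (s - p) = s * s - s * p - p * s + p * p" by (simp add: algebra_simps)
  also have "\<dots> = s - p" using h pp ss by simp
  finally have "s - p \<in> pos" using idem_pos diffA ss pp by metis
  thus "sle pos p s" unfolding sle_def .
qed

lemma ortho_comm:
  assumes hp: "p \<in> proj A" and hs: "s \<in> proj A" and h: "p * s = 0"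
  shows "s * p = 0"
proof -
  have "s * p * s = 0" using h by (simp add: mult.assoc)
  from sa4[OF projD[OF hs, THEN conjunct1] proj_pos[OF hp] this] show ?thesis by blast
qed

lemma sle_antisym: "sle pos r r' \<Longrightarrow> sle pos r' r \<Longrightarrow> r = r'"
  unfolding sle_def using pos_anti[of "r' - r"] by (simp add: algebra_simps)

definition is_join where
  "is_join p q r \<longleftrightarrow> r \<in> proj A \<and> sle pos p r \<and> sle pos q r \<and>
      (\<forall>s\<in>proj A. sle pos p s \<and> sle pos q s \<longrightarrow> sle pos r s)"

definition is_meet where
  "is_meet p q r \<longleftrightarrow> r \<in> proj A \<and> sle pos r p \<and> sle pos r q \<and>
      (\<forall>s\<in>proj A. sle pos s p \<and> sle pos s q \<longrightarrow> sle pos s r)"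

lemma join_unique: "is_join p q r \<Longrightarrow> pjoin A pos p q = r"
  unfolding pjoin_def
  apply (rule the_equality)
   apply (simp add: is_join_def)
  by (meson is_join_def sle_antisym)

lemma meet_unique: "is_meet p q r \<Longrightarrow> pmeet A pos p q = r"
  unfolding pmeet_def
  apply (rule the_equality)
   apply (simp add: is_meet_def)
  by (meson is_meet_def sle_antisym)

lemma join_exists:
  assumes hp: "p \<in> proj A" and hq: "q \<in> proj A"
  shows "\<exists>r. is_join p q r"
proof -
  have pp: "p * p = p" "p \<in> A" and qq: "q * q = q" "q \<in> A" using projD hp hq by auto
  obtain c where c: "c \<in> A" "c * c = c" and cb: "\<And>b. b \<in> A \<Longrightarrow> (p + q) * b = 0 \<longleftrightarrow> c * b = 0"
    using sa6[OF addA[OF pp(2) qq(2)]] by blast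
  have hc: "c \<in> proj A" using c unfolding proj_def by blast
  have c1: "c * (1 - c) = 0" using c by (simp add: algebra_simps)
  hence "(p + q) * (1 - c) = 0" using cb[OF diffA[OF oneA c(1)]] by blast
  hence "(1 - c) * (p + q) * (1 - c) = 0" by (simp add: mult.assoc)
  hence sum0: "(1 - c) * p * (1 - c) + (1 - c) * q * (1 - c) = 0" by (simp add: algebra_simps)
  have P1: "(1 - c) * p * (1 - c) \<in> pos"
    using sa3[OF proj_pos[OF proj_perp[OF hc]] proj_pos[OF hp]] .
  have P2: "(1 - c) * q * (1 - c) \<in> pos"
    using sa3[OF proj_pos[OF proj_perp[OF hc]] proj_pos[OF hq]] .
  have z1: "(1 - c) * p * (1 - c) = 0"
    using pos_anti[OF P1] P2 sum0 by (metis add_eq_0_iff)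
  have z2: "(1 - c) * q * (1 - c) = 0"
    using pos_anti[OF P2] P1 sum0 by (metis add_eq_0_iff add.commute)
  from sa4[OF diffA[OF oneA c(1)] proj_pos[OF hp] z1]
  have "(1 - c) * p = 0" "p * (1 - c) = 0" by auto
  hence lp: "sle pos p c" using le_iff[OF hp hc] by (simp add: algebra_simps)
  from sa4[OF diffA[OF oneA c(1)] proj_pos[OF hq] z2]
  have "(1 - c) * q = 0" "q * (1 - c) = 0" by auto
  hence lq: "sle pos q c" using le_iff[OF hq hc] by (simp add: algebra_simps)
  have lub: "sle pos c s" if hs: "s \<in> proj A" and a1: "sle pos p s" and a2: "sle pos q s" for s
  proof -
    have ss: "s \<in> A" "s * s = s" using projD[OF hs] by auto
    have "p * s = p" "q * s = q" using a1 a2 le_iff hp hq hs by auto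
    hence "(p + q) * (1 - s) = 0" by (simp add: algebra_simps)
    hence cs: "c * (1 - s) = 0" using cb[OF diffA[OF oneA ss(1)]] by blast
    hence "(1 - s) * c * (1 - s) = 0" by (simp add: mult.assoc)
    from sa4[OF diffA[OF oneA ss(1)] proj_pos[OF hc] this]
    have "(1 - s) * c = 0" by auto
    with cs have "c * s = c" "s * c = c" by (simp_all add: algebra_simps)
    thus ?thesis using le_iff[OF hc hs] by blast
  qed
  have "is_join p q c" unfolding is_join_def using hc lp lq lub by blast
  thus ?thesis by blast
qed

lemma sle_perp: "sle pos (1 - x) (1 - y) \<longleftrightarrow> sle pos y x"
  unfolding sle_def by (simp add: algebra_simps)

lemma meet_from_join:
  assumes hp: "p \<in> proj A" and hq: "q \<in> proj A" and j: "is_join (1 - p) (1 - q) j"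
  shows "is_meet p q (1 - j)"
proof -
  have hj: "j \<in> proj A" and jl: "sle pos (1 - p) j" "sle pos (1 - q) j"
    and jg: "\<And>s. s \<in> proj A \<Longrightarrow> sle pos (1 - p) s \<Longrightarrow> sle pos (1 - q) s \<Longrightarrow> sle pos j s"
    using j unfolding is_join_def by auto
  have a1: "sle pos (1 - j) p" using jl(1) sle_perp[of p "1 - j"] by simp
  have a2: "sle pos (1 - j) q" using jl(2) sle_perp[of q "1 - j"] by simp
  have b: "sle pos s (1 - j)" if hs: "s \<in> proj A" "sle pos s p" "sle pos s q" for s
  proof -
    have "sle pos (1 - p) (1 - s)" using hs(2) sle_perp[of p s] by simp
    moreover have "sle pos (1 - q) (1 - s)" using hs(3) sle_perp[of q s] by simp
    ultimately have "sle pos j (1 - s)" using jg proj_perp[OF hs(1)] by simp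
    thus ?thesis using sle_perp[of "1 - s" j] by simp
  qed
  show ?thesis unfolding is_meet_def using proj_perp[OF hj] a1 a2 b by blast
qed

lemma meet_exists:
  assumes hp: "p \<in> proj A" and hq: "q \<in> proj A"
  shows "\<exists>r. is_meet p q r"
proof -
  obtain j where "is_join (1 - p) (1 - q) j"
    using join_exists[OF proj_perp[OF hp] proj_perp[OF hq]] by blast
  thus ?thesis using meet_from_join[OF hp hq] by blast
qed

lemma join_from_meet:
  assumes hp: "p \<in> proj A" and hq: "q \<in> proj A" and m: "is_meet p q m"
  shows "is_join (1 - p) (1 - q) (1 - m)"
proof -
  have hm: "m \<in> proj A" and ml: "sle pos m p" "sle pos m q"
    and mg: "\<And>s. s \<in> proj A \<Longrightarrow> sle pos s p \<Longrightarrow> sle pos s q \<Longrightarrow> sle pos s m"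
    using m unfolding is_meet_def by auto
  have a1: "sle pos (1 - p) (1 - m)" using ml(1) sle_perp[of p m] by simp
  have a2: "sle pos (1 - q) (1 - m)" using ml(2) sle_perp[of q m] by simp
  have b: "sle pos (1 - m) s" if hs: "s \<in> proj A" "sle pos (1 - p) s" "sle pos (1 - q) s" for s
  proof -
    have "sle pos (1 - s) p" using hs(2) sle_perp[of p "1 - s"] by simp
    moreover have "sle pos (1 - s) q" using hs(3) sle_perp[of q "1 - s"] by simp
    ultimately have "sle pos (1 - s) m" using mg proj_perp[OF hs(1)] by simp
    thus ?thesis using sle_perp[of m "1 - s"] by simp
  qed
  show ?thesis unfolding is_join_def using proj_perp[OF hm] a1 a2 b by blast
qed

lemma comm_meet:
  assumes hp: "p \<in> proj A" and hs: "s \<in> proj A" and c: "p * s = s * p"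
  shows "is_meet p s (p * s)"
proof -
  have pp: "p * p = p" "p \<in> A" and ss: "s * s = s" "s \<in> A" using projD hp hs by auto
  have "(p - s) * (p - s) = p * p - p * s - s * p + s * s" by (simp add: algebra_simps)
  also have "\<dots> = p + s - 2 *\<^sub>R (p * s)" using pp ss c by (simp add: scaleR_2)
  finally have sq: "(p - s) * (p - s) = p + s - 2 *\<^sub>R (p * s)" .
  have "p * s = (1/2) *\<^sub>R (p + s - (p - s) * (p - s))" by (simp add: sq)
  hence inA: "p * s \<in> A"
    using scaleA diffA addA pp(2) ss(2) posA sq_pos by metis
  have m1: "p * s * p = p * s" "p * (p * s) = p * s" "p * s * s = p * s" "s * (p * s) = p * s"
    using pp ss c by (simp_all add: mult.assoc[symmetric]) (metis mult.assoc)+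
  have idem: "p * s * (p * s) = p * s" using m1 by (metis mult.assoc)
  have hr: "p * s \<in> proj A" using inA idem unfolding proj_def by blast
  have l1: "sle pos (p * s) p" using le_iff[OF hr hp] m1 by simp
  have l2: "sle pos (p * s) s" using le_iff[OF hr hs] m1 by simp
  have g: "sle pos t (p * s)" if ht: "t \<in> proj A" "sle pos t p" "sle pos t s" for t
  proof -
    have "t * p = t" "p * t = t" "t * s = t" "s * t = t" using ht le_iff hp hs by auto
    hence "t * (p * s) = t" "p * s * t = t" by (metis mult.assoc)+
    thus ?thesis using le_iff[OF ht(1) hr] by simp
  qed
  show ?thesis unfolding is_meet_def using hr l1 l2 g by blast
qed

lemma orth_join:
  assumes ha: "a \<in> proj A" and hb: "b \<in> proj A" and o: "a * b = 0"
  shows "is_join a b (a + b)"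
proof -
  have aa: "a * a = a" "a \<in> A" and bb: "b * b = b" "b \<in> A" using projD ha hb by auto
  have o2: "b * a = 0" using ortho_comm[OF ha hb o] .
  have "(a + b) * (a + b) = a + b" using aa bb o o2 by (simp add: algebra_simps)
  hence hr: "a + b \<in> proj A" using addA aa bb unfolding proj_def by blast
  have l1: "sle pos a (a + b)" using le_iff[OF ha hr] aa o o2 by (simp add: algebra_simps)
  have l2: "sle pos b (a + b)" using le_iff[OF hb hr] bb o o2 by (simp add: algebra_simps)
  have g: "sle pos (a + b) s" if hs: "s \<in> proj A" "sle pos a s" "sle pos b s" for s
  proof -
    have "a * s = a" "s * a = a" "b * s = b" "s * b = b" using hs le_iff ha hb by auto
    thus ?thesis using le_iff[OF hr hs(1)] by (simp add: algebra_simps)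
  qed
  show ?thesis unfolding is_join_def using hr l1 l2 g by blast
qed

lemma proj_prods:
  assumes "sle pos x y" "x \<in> proj A" "y \<in> proj A"
  shows "x * y = x" "y * x = x"
  using assms le_iff by auto

end

theorem theorem2p2:
  fixes A pos :: "'r::real_algebra_1 set" and p q pr :: 'r
  assumes SA: "synaptic_algebra A pos"
    and hp: "p \<in> proj A" and hq: "q \<in> proj A"
    and pr_def: "pr = pmeet A pos (pmeet A pos p (pjoin A pos (pperp p) q))
                                  (pjoin A pos (pperp p) (pperp q))"
  shows "pr \<in> proj A
    \<and> \<comment> \<open>(i)\<close>
      portho pos (pjoin A pos (pmeet A pos p q) (pmeet A pos p (pperp q))) pr
    \<and> p = pjoin A pos (pmeet A pos p q) (pmeet A pos p (pperp q)) + pr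
    \<and> p = pjoin A pos (pjoin A pos (pmeet A pos p q) (pmeet A pos p (pperp q))) pr
    \<and> portho pos (pmeet A pos p q) (pmeet A pos p (pperp q))
    \<and> portho pos (pmeet A pos p q + pmeet A pos p (pperp q)) pr
    \<and> p = pmeet A pos p q + pmeet A pos p (pperp q) + pr
    \<and> \<comment> \<open>(ii)\<close>
      sle pos 0 pr \<and> sle pos pr p
    \<and> p - pr = pjoin A pos (pmeet A pos p q) (pmeet A pos p (pperp q))
    \<and> \<comment> \<open>(iii)\<close>
      (p * q = q * p \<longleftrightarrow> pr = 0)"
proof -
  interpret sa A pos using SA by unfold_locales
  have hq': "1 - q \<in> proj A" using proj_perp[OF hq] .
  have hp': "1 - p \<in> proj A" using proj_perp[OF hp] .
  obtain a where ma: "is_meet p q a" using meet_exists[OF hp hq] by blast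
  obtain b where mb: "is_meet p (1 - q) b" using meet_exists[OF hp hq'] by blast
  have A1: "pmeet A pos p q = a" using meet_unique[OF ma] .
  have B1: "pmeet A pos p (pperp q) = b" using meet_unique[OF mb] unfolding pperp_def .
  have ha: "a \<in> proj A" "sle pos a p" "sle pos a q" using ma unfolding is_meet_def by auto
  have hb: "b \<in> proj A" "sle pos b p" "sle pos b (1 - q)" using mb unfolding is_meet_def by auto
  have aa: "a * a = a" "a \<in> A" and bb: "b * b = b" "b \<in> A" using projD ha hb by auto
  have pa: "a * p = a" "p * a = a" using proj_prods[OF ha(2) ha(1) hp] by auto
  have qa: "a * q = a" "q * a = a" using proj_prods[OF ha(3) ha(1) hq] by auto
  have pb: "b * p = b" "p * b = b" using proj_prods[OF hb(2) hb(1) hp] by auto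
  have qb': "b * (1 - q) = b" "(1 - q) * b = b" using proj_prods[OF hb(3) hb(1) hq'] by auto
  have qb: "b * q = 0" "q * b = 0" using qb' by (simp_all add: algebra_simps)
  have ab: "a * b = 0"
  proof -
    have "a * b = a * q * b" using qa by simp
    also have "\<dots> = 0" using qb by (simp add: mult.assoc)
    finally show ?thesis .
  qed
  have ba: "b * a = 0"
  proof -
    have "b * a = b * (q * a)" using qa by simp
    also have "\<dots> = 0" using qb by (simp add: mult.assoc[symmetric])
    finally show ?thesis .
  qed
  have J1: "pjoin A pos (pperp p) q = 1 - b"
    using join_unique[OF join_from_meet[OF hp hq' mb]] unfolding pperp_def by simp
  have J2: "pjoin A pos (pperp p) (pperp q) = 1 - a"
    using join_unique[OF join_from_meet[OF hp hq ma]] unfolding pperp_def by simp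
  have hb1: "1 - b \<in> proj A" using proj_perp[OF hb(1)] .
  have mm: "is_meet p (1 - b) (p * (1 - b))"
    using comm_meet[OF hp hb1] pb by (simp add: algebra_simps)
  have e1: "p * (1 - b) = p - b" using pb by (simp add: algebra_simps)
  have M: "pmeet A pos p (1 - b) = p - b" using meet_unique[OF mm] e1 by simp
  have hpb: "p - b \<in> proj A" using mm e1 unfolding is_meet_def by simp
  have ha1: "1 - a \<in> proj A" using proj_perp[OF ha(1)] .
  have "(p - b) * (1 - a) = (1 - a) * (p - b)" using pa ab ba by (simp add: algebra_simps)
  hence mr: "is_meet (p - b) (1 - a) ((p - b) * (1 - a))" using comm_meet[OF hpb ha1] by simp
  have e2: "(p - b) * (1 - a) = p - b - a" using pa ba by (simp add: algebra_simps)
  have PR: "pr = p - b - a" using pr_def J1 J2 M meet_unique[OF mr] e2 by simp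
  have hpr: "pr \<in> proj A" using mr e2 PR unfolding is_meet_def by simp
  have jab: "is_join a b (a + b)" using orth_join[OF ha(1) hb(1) ab] .
  have JAB: "pjoin A pos a b = a + b" using join_unique[OF jab] .
  have hab: "a + b \<in> proj A" using jab unfolding is_join_def by blast
  have o3: "(a + b) * pr = 0" unfolding PR by (simp add: algebra_simps pa pb aa bb ab ba)
  have sump: "(a + b) + pr = p" using PR by (simp add: algebra_simps)
  have JP: "pjoin A pos (a + b) pr = p"
    using join_unique[OF orth_join[OF hab hpr o3]] sump by simp
  have ppos: "1 - p \<in> pos" using proj_pos[OF hp'] .
  have o1: "portho pos (a + b) pr"
    unfolding portho_def pperp_def sle_def using ppos PR by (simp add: algebra_simps)
  have o2: "portho pos a b"
    unfolding portho_def pperp_def using le_iff[OF ha(1) proj_perp[OF hb(1)]] ab ba aa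
    by (simp add: algebra_simps)
  have s1: "sle pos 0 pr" unfolding sle_def using proj_pos[OF hpr] by simp
  have dpr: "p - pr = a + b" using PR by (simp add: algebra_simps)
  have s2: "sle pos pr p" unfolding sle_def dpr using proj_pos[OF hab] .
  have iii: "p * q = q * p \<longleftrightarrow> pr = 0"
  proof
    assume c: "p * q = q * p"
    have "a = p * q" using meet_unique[OF ma] meet_unique[OF comm_meet[OF hp hq c]] by simp
    moreover have "p * (1 - q) = (1 - q) * p" using c by (simp add: algebra_simps)
    hence "b = p * (1 - q)" using meet_unique[OF mb] meet_unique[OF comm_meet[OF hp hq']] by simp
    ultimately show "pr = 0" using PR by (simp add: algebra_simps)
  next
    assume "pr = 0"
    hence pe: "p = a + b" using PR by (simp add: algebra_simps)
    have "p * q = a" using pe qa qb by (simp add: algebra_simps)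
    moreover have "q * p = a" using pe qa qb by (simp add: algebra_simps)
    ultimately show "p * q = q * p" by simp
  qed
  show ?thesis
    unfolding A1 B1 JAB JP
    apply (intro conjI)
    using hpr o1 o2 s1 s2 iii sump dpr by simp_all
qed

end
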